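(* Let $G$ be a simple graph on six vertices with degree sequence $d_1\leq d_2\leq\cdots\leq d_6$, where $d_1=d_2=2$ and $d_3\geq 3$. Then $G$ is Hamiltonian unless one of the following holds: (a) the two vertices of degree $2$ are nonadjacent and have the same pair of neighbors; or (b) $G$ is isomorphic to the graph $J$ obtained from a triangle and a complete graph $K_4$ by identifying one vertex of the triangle with one vertex of the $K_4$.
   Context: The degree sequence of a graph on $n$ vertices is the nondecreasing sequence $d_1\leq\cdots\leq d_n$ of its vertex degrees. A graph is Hamiltonian if it has a cycle through all of its vertices. *)

theory Defs
  imports Main "HOL-Library.Multiset"
begin

definition simple_graph :: "'a set \<Rightarrow> ('a \<Rightarrow> 'a \<Rightarrow> bool) \<Rightarrow> bool" where
  "simple_graph V E \<longleftrightarrow> finite V \<and> (\<forall>u v. E u v \<longrightarrow> E v u) \<and> (\<forall>v. \<not> E v v)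
     \<and> (\<forall>u v. E u v \<longrightarrow> u \<in> V \<and> v \<in> V)"

definition neighbors :: "'a set \<Rightarrow> ('a \<Rightarrow> 'a \<Rightarrow> bool) \<Rightarrow> 'a \<Rightarrow> 'a set" where
  "neighbors V E v = {u \<in> V. E v u}"

definition degree :: "'a set \<Rightarrow> ('a \<Rightarrow> 'a \<Rightarrow> bool) \<Rightarrow> 'a \<Rightarrow> nat" where
  "degree V E v = card (neighbors V E v)"

text \<open>Degree sequence: the nondecreasing list of vertex degrees (index 0 = d_1).\<close>
definition degree_sequence :: "'a set \<Rightarrow> ('a \<Rightarrow> 'a \<Rightarrow> bool) \<Rightarrow> nat list" where
  "degree_sequence V E = sorted_list_of_multiset (image_mset (degree V E) (mset_set V))"

definition hamiltonian :: "'a set \<Rightarrow> ('a \<Rightarrow> 'a \<Rightarrow> bool) \<Rightarrow> bool" where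
  "hamiltonian V E \<longleftrightarrow> (\<exists>vs. distinct vs \<and> set vs = V \<and> length vs \<ge> 3
      \<and> (\<forall>i < length vs - 1. E (vs ! i) (vs ! Suc i))
      \<and> E (last vs) (hd vs))"

definition graph_iso :: "'a set \<Rightarrow> ('a \<Rightarrow> 'a \<Rightarrow> bool) \<Rightarrow> 'b set \<Rightarrow> ('b \<Rightarrow> 'b \<Rightarrow> bool) \<Rightarrow> bool" where
  "graph_iso V E W F \<longleftrightarrow> (\<exists>f. bij_betw f V W \<and> (\<forall>u\<in>V. \<forall>v\<in>V. E u v \<longleftrightarrow> F (f u) (f v)))"

definition J_verts :: "nat set" where "J_verts = {0..5}"

definition J_edge :: "nat \<Rightarrow> nat \<Rightarrow> bool" where
  "J_edge u v \<longleftrightarrow> u \<noteq> v \<and> ((u \<in> {0,1,2} \<and> v \<in> {0,1,2}) \<or> (u \<in> {2,3,4,5} \<and> v \<in> {2,3,4,5}))"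

end

theory Submission
  imports Defs
begin

lemma list6: "length s = 6 \<Longrightarrow> s = [s!0,s!1,s!2,s!3,s!4,s!5]"
  by (simp add: list_eq_iff_nth_eq less_Suc_eq nth_Cons numeral_eq_Suc split: nat.split)

lemma degseq:
  assumes fin: "finite V" and c6: "card V = 6"
    and d0: "degree_sequence V E ! 0 = 2" and d1: "degree_sequence V E ! 1 = 2"
    and d2: "degree_sequence V E ! 2 \<ge> 3"
  shows "card {v\<in>V. degree V E v = 2} = 2 \<and> (\<forall>v\<in>V. degree V E v = 2 \<or> degree V E v \<ge> 3)"
proof -
  define D where "D = image_mset (degree V E) (mset_set V)"
  define s where "s = degree_sequence V E"
  have ms: "mset s = D" unfolding s_def degree_sequence_def D_def by simp
  have so: "sorted s" unfolding s_def degree_sequence_def by simp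
  have len: "length s = 6" using ms c6 unfolding D_def by (metis size_image_mset size_mset size_mset_set)
  have ge: "i < 6 \<Longrightarrow> 2 \<le> i \<Longrightarrow> s ! i \<ge> 3" for i
    using sorted_nth_mono[OF so, of 2 i] len d2 s_def by simp
  have A: "\<forall>v\<in>V. degree V E v = 2 \<or> degree V E v \<ge> 3"
  proof
    fix v assume "v \<in> V"
    then have "degree V E v \<in># D" unfolding D_def using fin by simp
    then have "degree V E v \<in> set s" using ms by (metis set_mset_mset)
    then obtain i where i: "i < 6" "s ! i = degree V E v" using len by (metis in_set_conv_nth)
    show "degree V E v = 2 \<or> degree V E v \<ge> 3"
    proof (cases "i < 2")
      case True then have "i = 0 \<or> i = 1" by auto
      then show ?thesis using i d0 d1 s_def by auto
    next
      case False then show ?thesis using ge[of i] i by auto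
    qed
  qed
  have "filter_mset (\<lambda>n. n = 2) D = image_mset (degree V E) (mset_set {v\<in>V. degree V E v = 2})"
    unfolding D_def using fin by (simp add: filter_mset_image_mset)
  then have "card {v\<in>V. degree V E v = 2} = size (filter_mset (\<lambda>n. n = 2) D)" by simp
  also have "\<dots> = length (filter (\<lambda>n. n = 2) s)" using ms by (metis mset_filter size_mset)
  also have "\<dots> = 2"
  proof -
    have e: "s = [s!0,s!1,s!2,s!3,s!4,s!5]" using list6 len by blast
    have "s!3 \<ge> 3" "s!4 \<ge> 3" "s!5 \<ge> 3" "s!2 \<ge> 3" using ge by auto
    moreover have "\<And>a0 a1 a2 a3 a4 a5. a0 = 2 \<Longrightarrow> a1 = 2 \<Longrightarrow> a2 \<ge> (3::nat) \<Longrightarrow> a3 \<ge> 3 \<Longrightarrow> a4 \<ge> 3 \<Longrightarrow> a5 \<ge> 3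
       \<Longrightarrow> length (filter (\<lambda>n. n = 2) [a0,a1,a2,a3,a4,a5]) = 2" by auto
    ultimately show ?thesis using d0 d1 s_def e by metis
  qed
  finally show ?thesis using A by simp
qed
lemma deg3:
  assumes "simple_graph V E" "degree V E v \<ge> 3"
  shows "\<exists>u\<in>V. E v u \<and> u \<noteq> s \<and> u \<noteq> t"
proof (rule ccontr)
  assume "\<not> ?thesis"
  then have "neighbors V E v \<subseteq> {s,t}" unfolding neighbors_def by auto
  then have "card (neighbors V E v) \<le> card {s,t}" by (simp add: card_mono)
  also have "\<dots> \<le> 2" by (simp add: card_le_Suc0_iff_eq card_insert_if)
  finally show False using assms unfolding degree_def by simp
qed

lemma deg2:
  assumes "simple_graph V E" "degree V E v = 2"
  shows "\<exists>p q. p \<noteq> q \<and> (\<forall>u. E v u \<longleftrightarrow> u = p \<or> u = q)"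
proof -
  obtain p q where "neighbors V E v = {p,q}" "p \<noteq> q" using assms(2) unfolding degree_def card_2_iff by auto
  note eq = this
  have "E v u \<longleftrightarrow> u \<in> neighbors V E v" for u using assms(1) unfolding simple_graph_def neighbors_def by auto
  then have "\<forall>u. E v u \<longleftrightarrow> u = p \<or> u = q" using eq(1) by auto
  then show ?thesis using \<open>p \<noteq> q\<close> by blast
qed

lemma ham6:
  assumes "distinct [a1,a2,a3,a4,a5,a6]" "V = {a1,a2,a3,a4,a5,a6}"
    "E a1 a2" "E a2 a3" "E a3 a4" "E a4 a5" "E a5 a6" "E a6 a1"
  shows "hamiltonian V E"
  unfolding hamiltonian_def
proof (intro exI[of _ "[a1,a2,a3,a4,a5,a6]"] conjI)
  show "\<forall>i<length [a1, a2, a3, a4, a5, a6] - 1. E ([a1, a2, a3, a4, a5, a6] ! i) ([a1, a2, a3, a4, a5, a6] ! Suc i)"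
  proof (intro allI impI)
    fix i assume "i < length [a1, a2, a3, a4, a5, a6] - 1"
    then have "i = 0 \<or> i = 1 \<or> i = 2 \<or> i = 3 \<or> i = 4" by auto
    then show "E ([a1, a2, a3, a4, a5, a6] ! i) ([a1, a2, a3, a4, a5, a6] ! Suc i)"
      by (elim disjE) (simp_all add: assms(3-8) numeral_eq_Suc)
  qed
qed (use assms(1,2,8) in auto)
definition P3 :: "'a set \<Rightarrow> ('a \<Rightarrow> 'a \<Rightarrow> bool) \<Rightarrow> 'a \<Rightarrow> bool" where
  "P3 V E v \<longleftrightarrow> (\<forall>s t. \<exists>u\<in>V. E v u \<and> u \<noteq> s \<and> u \<noteq> t)"

lemma caseJ:
  assumes sg: "simple_graph V E" and dist: "distinct [x,y,p,b,c,d]" and VV: "V = {x,y,p,b,c,d}"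
    and Nx: "\<forall>u. E x u \<longleftrightarrow> u = y \<or> u = p" and Ny: "\<forall>u. E y u \<longleftrightarrow> u = x \<or> u = p"
    and Pb: "P3 V E b" and Pc: "P3 V E c" and Pd: "P3 V E d"
  shows "graph_iso V E J_verts J_edge"
proof -
  have sym: "\<And>u v. E u v \<Longrightarrow> E v u" and irr: "\<And>v. \<not> E v v" and inV: "\<And>u v. E u v \<Longrightarrow> u \<in> V \<and> v \<in> V"
    using sg unfolding simple_graph_def by blast+
  have nx: "\<And>u. E u x \<longleftrightarrow> u = y \<or> u = p" using Nx sym by blast
  have ny: "\<And>u. E u y \<longleftrightarrow> u = x \<or> u = p" using Ny sym by blast
  have bc: "E b c" using Pb[unfolded P3_def, rule_format, of p d] nx ny irr dist VV by auto
  have bd: "E b d" using Pb[unfolded P3_def, rule_format, of p c] nx ny irr dist VV by auto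
  have bp: "E b p" using Pb[unfolded P3_def, rule_format, of c d] nx ny irr dist VV by auto
  have cd: "E c d" using Pc[unfolded P3_def, rule_format, of p b] nx ny irr dist VV by auto
  have cp: "E c p" using Pc[unfolded P3_def, rule_format, of b d] nx ny irr dist VV by auto
  have dp: "E d p" using Pd[unfolded P3_def, rule_format, of b c] nx ny irr dist VV by auto
  have Ep: "\<And>u v. u \<in> V \<Longrightarrow> v \<in> V \<Longrightarrow> E u v \<longleftrightarrow> u \<noteq> v \<and> ((u \<in> {x,y,p} \<and> v \<in> {x,y,p}) \<or> (u \<in> {p,b,c,d} \<and> v \<in> {p,b,c,d}))"
    unfolding VV using Nx Ny nx ny bc bd bp cd cp dp sym irr dist by auto
  define f where "f v = (if v = x then 0 else if v = y then 1 else if v = p then 2 else if v = b then 3 else if v = c then 4 else (5::nat))" for v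
  have img: "f ` V = J_verts" unfolding VV J_verts_def f_def using dist by auto
  have inj: "inj_on f V" unfolding VV inj_on_def f_def using dist by auto
  have "\<forall>u\<in>V. \<forall>v\<in>V. E u v \<longleftrightarrow> J_edge (f u) (f v)"
  proof (intro ballI)
    fix u v assume "u \<in> V" "v \<in> V"
    then show "E u v \<longleftrightarrow> J_edge (f u) (f v)" unfolding Ep[OF \<open>u \<in> V\<close> \<open>v \<in> V\<close>]
      using dist unfolding VV J_edge_def f_def by auto
  qed
  then show ?thesis unfolding graph_iso_def bij_betw_def using img inj by blast
qed

lemma case1b:
  assumes sg: "simple_graph V E" and dist: "distinct [x,y,p,q,r,s]" and VV: "V = {x,y,p,q,r,s}"
    and Nx: "\<forall>u. E x u \<longleftrightarrow> u = y \<or> u = p" and Ny: "\<forall>u. E y u \<longleftrightarrow> u = x \<or> u = q"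
    and Pr: "P3 V E r" and Ps: "P3 V E s"
  shows "hamiltonian V E"
proof -
  have sym: "\<And>u v. E u v \<Longrightarrow> E v u" and irr: "\<And>v. \<not> E v v"
    using sg unfolding simple_graph_def by blast+
  have nx: "\<And>u. E u x \<longleftrightarrow> u = y \<or> u = p" using Nx sym by blast
  have ny: "\<And>u. E u y \<longleftrightarrow> u = x \<or> u = q" using Ny sym by blast
  have rq: "E r q" using Pr[unfolded P3_def, rule_format, of p s] nx ny irr dist VV by auto
  have rs: "E r s" using Pr[unfolded P3_def, rule_format, of p q] nx ny irr dist VV by auto
  have sp: "E s p" using Ps[unfolded P3_def, rule_format, of q r] nx ny irr dist VV by auto
  show ?thesis
    by (rule ham6[of x y q r s p]) (use dist VV Nx Ny rq rs sp sym in auto)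
qed

lemma case2b:
  assumes sg: "simple_graph V E" and dist: "distinct [x,y,a,b,c,d]" and VV: "V = {x,y,a,b,c,d}"
    and Nx: "\<forall>u. E x u \<longleftrightarrow> u = a \<or> u = c" and Ny: "\<forall>u. E y u \<longleftrightarrow> u = b \<or> u = c"
    and Pd: "P3 V E d"
  shows "hamiltonian V E"
proof -
  have sym: "\<And>u v. E u v \<Longrightarrow> E v u" and irr: "\<And>v. \<not> E v v"
    using sg unfolding simple_graph_def by blast+
  have nx: "\<And>u. E u x \<longleftrightarrow> u = a \<or> u = c" using Nx sym by blast
  have ny: "\<And>u. E u y \<longleftrightarrow> u = b \<or> u = c" using Ny sym by blast
  have da: "E d a" using Pd[unfolded P3_def, rule_format, of b c] nx ny irr dist VV by auto
  have db: "E d b" using Pd[unfolded P3_def, rule_format, of a c] nx ny irr dist VV by auto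
  show ?thesis
    by (rule ham6[of x a d b y c]) (use dist VV Nx Ny da db sym in auto)
qed

lemma case2c:
  assumes sg: "simple_graph V E" and dist: "distinct [x,y,a,b,c,d]" and VV: "V = {x,y,a,b,c,d}"
    and Nx: "\<forall>u. E x u \<longleftrightarrow> u = a \<or> u = b" and Ny: "\<forall>u. E y u \<longleftrightarrow> u = c \<or> u = d"
    and Pa: "P3 V E a" and Pb: "P3 V E b" and Pc: "P3 V E c" and Pd: "P3 V E d"
  shows "hamiltonian V E"
proof -
  have sym: "\<And>u v. E u v \<Longrightarrow> E v u" and irr: "\<And>v. \<not> E v v"
    using sg unfolding simple_graph_def by blast+
  have nx: "\<And>u. E u x \<longleftrightarrow> u = a \<or> u = b" using Nx sym by blast
  have ny: "\<And>u. E u y \<longleftrightarrow> u = c \<or> u = d" using Ny sym by blast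
  have a1: "E a c \<or> E a d" using Pa[unfolded P3_def, rule_format, of x b] nx ny irr dist VV by auto
  have a2: "E a b \<or> E a d" using Pa[unfolded P3_def, rule_format, of x c] nx ny irr dist VV by auto
  have a3: "E a b \<or> E a c" using Pa[unfolded P3_def, rule_format, of x d] nx ny irr dist VV by auto
  have b1: "E b c \<or> E b d" using Pb[unfolded P3_def, rule_format, of x a] nx ny irr dist VV by auto
  have b2: "E b a \<or> E b d" using Pb[unfolded P3_def, rule_format, of x c] nx ny irr dist VV by auto
  have b3: "E b a \<or> E b c" using Pb[unfolded P3_def, rule_format, of x d] nx ny irr dist VV by auto
  have c1: "E c a \<or> E c b" using Pc[unfolded P3_def, rule_format, of y d] nx ny irr dist VV by auto
  have c2: "E c d \<or> E c b" using Pc[unfolded P3_def, rule_format, of y a] nx ny irr dist VV by auto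
  have c3: "E c d \<or> E c a" using Pc[unfolded P3_def, rule_format, of y b] nx ny irr dist VV by auto
  have d1: "E d a \<or> E d b" using Pd[unfolded P3_def, rule_format, of y c] nx ny irr dist VV by auto
  have d2: "E d c \<or> E d b" using Pd[unfolded P3_def, rule_format, of y a] nx ny irr dist VV by auto
  have d3: "E d c \<or> E d a" using Pd[unfolded P3_def, rule_format, of y b] nx ny irr dist VV by auto
  have "(E a c \<and> E b d) \<or> (E a d \<and> E b c)"
    using a1 a2 a3 b1 b2 b3 c1 c2 c3 d1 d2 d3 sym by blast
  then show ?thesis
  proof
    assume "E a c \<and> E b d"
    then show ?thesis
      by (intro ham6[of x a c y d b]) (use dist VV Nx Ny sym in auto)
  next
    assume "E a d \<and> E b c"
    then show ?thesis
      by (intro ham6[of x a d y c b]) (use dist VV Nx Ny sym in auto)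
  qed
qed


lemma rest_eq:
  assumes "finite V" "card V = 6" "distinct [x1,x2,x3,x4,x5,x6]" "{x1,x2,x3,x4,x5,x6} \<subseteq> V"
  shows "V = {x1,x2,x3,x4,x5,x6}"
proof -
  have "card {x1,x2,x3,x4,x5,x6} = 6" using assms(3) by simp
  then show ?thesis using card_subset_eq[OF assms(1) assms(4)] assms(2) by simp
qed

lemma rest1:
  assumes "finite V" "card V = 6" "distinct [x1,x2,x3,x4,x5]" "{x1,x2,x3,x4,x5} \<subseteq> V"
  obtains x6 where "distinct [x1,x2,x3,x4,x5,x6]" "V = {x1,x2,x3,x4,x5,x6}"
proof -
  have "card (V - {x1,x2,x3,x4,x5}) = 1" using assms by (simp add: card_Diff_subset)
  then obtain z where z: "V - {x1,x2,x3,x4,x5} = {z}" using card_1_singletonE by blast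
  then have "distinct [x1,x2,x3,x4,x5,z]" "V = {x1,x2,x3,x4,x5,z}" using assms(3,4) by auto
  then show ?thesis using that by blast
qed

lemma rest2:
  assumes "finite V" "card V = 6" "distinct [x1,x2,x3,x4]" "{x1,x2,x3,x4} \<subseteq> V"
  obtains x5 x6 where "distinct [x1,x2,x3,x4,x5,x6]" "V = {x1,x2,x3,x4,x5,x6}"
proof -
  have "card (V - {x1,x2,x3,x4}) = 2" using assms by (simp add: card_Diff_subset)
  then obtain z w where z: "V - {x1,x2,x3,x4} = {z,w}" "z \<noteq> w" unfolding card_2_iff by blast
  then have "distinct [x1,x2,x3,x4,z,w]" "V = {x1,x2,x3,x4,z,w}" using assms(3,4) by auto
  then show ?thesis using that by blast
qed

lemma rest3:
  assumes "finite V" "card V = 6" "distinct [x1,x2,x3]" "{x1,x2,x3} \<subseteq> V"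
  obtains x4 x5 x6 where "distinct [x1,x2,x3,x4,x5,x6]" "V = {x1,x2,x3,x4,x5,x6}"
proof -
  have "card (V - {x1,x2,x3}) = 3" using assms by (simp add: card_Diff_subset)
  then obtain z w v where z: "V - {x1,x2,x3} = {z,w,v}" "z \<noteq> w" "w \<noteq> v" "z \<noteq> v" unfolding card_3_iff by blast
  then have "distinct [x1,x2,x3,z,w,v]" "V = {x1,x2,x3,z,w,v}" using assms(3,4) by auto
  then show ?thesis using that by blast
qed

theorem lemma4p3:
  fixes V :: "'a set" and E :: "'a \<Rightarrow> 'a \<Rightarrow> bool"
  assumes "simple_graph V E"
    and "card V = 6"
    and "degree_sequence V E ! 0 = 2"
    and "degree_sequence V E ! 1 = 2"
    and "degree_sequence V E ! 2 \<ge> 3"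
  shows "hamiltonian V E
    \<or> (\<exists>x\<in>V. \<exists>y\<in>V. x \<noteq> y \<and> degree V E x = 2 \<and> degree V E y = 2 \<and> \<not> E x y
         \<and> neighbors V E x = neighbors V E y)
    \<or> graph_iso V E J_verts J_edge"
proof -
  note sg = assms(1)
  have fin: "finite V" using sg unfolding simple_graph_def by blast
  have sym: "\<And>u v. E u v \<Longrightarrow> E v u" and irr: "\<And>v. \<not> E v v" and inV: "\<And>u v. E u v \<Longrightarrow> u \<in> V \<and> v \<in> V"
    using sg unfolding simple_graph_def by blast+
  have ds: "card {v\<in>V. degree V E v = 2} = 2" "\<forall>v\<in>V. degree V E v = 2 \<or> degree V E v \<ge> 3"
    using degseq[OF fin assms(2-5)] by auto
  obtain x y where xy: "{v\<in>V. degree V E v = 2} = {x,y}" "x \<noteq> y" using ds(1) unfolding card_2_iff by blast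
  have xV: "x \<in> V" and yV: "y \<in> V" and dx: "degree V E x = 2" and dy: "degree V E y = 2" using xy(1) by blast+
  have P: "P3 V E v" if "v \<in> V" "v \<noteq> x" "v \<noteq> y" for v
  proof -
    have "degree V E v \<ge> 3" using ds(2) that xy(1) by blast
    then show ?thesis unfolding P3_def using deg3[OF sg] by blast
  qed
  obtain p1 p2 where pp: "p1 \<noteq> p2" "\<forall>u. E x u \<longleftrightarrow> u = p1 \<or> u = p2" using deg2[OF sg dx] by blast
  obtain q1 q2 where qq: "q1 \<noteq> q2" "\<forall>u. E y u \<longleftrightarrow> u = q1 \<or> u = q2" using deg2[OF sg dy] by blast
  have pV: "p1 \<in> V" "p2 \<in> V" "q1 \<in> V" "q2 \<in> V" using pp qq inV by blast+
  have pne: "p1 \<noteq> x" "p2 \<noteq> x" "q1 \<noteq> y" "q2 \<noteq> y" using pp qq irr by blast+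
  show ?thesis
  proof (cases "E x y")
    case True
    obtain p where p: "p \<noteq> y" "\<forall>u. E x u \<longleftrightarrow> u = y \<or> u = p"
      using pp True by (metis)
    obtain q where q: "q \<noteq> x" "\<forall>u. E y u \<longleftrightarrow> u = x \<or> u = q"
      using qq sym[OF True] by (metis)
    have pq: "p \<in> V" "q \<in> V" "p \<noteq> x" "q \<noteq> y" using p q inV irr by blast+
    show ?thesis
    proof (cases "p = q")
      case True
      obtain b c d where bcd: "distinct [x,y,p,b,c,d]" "V = {x,y,p,b,c,d}"
        using rest3[OF fin assms(2), of x y p] xy(2) p pq xV yV by auto
      have "graph_iso V E J_verts J_edge"
        by (rule caseJ[OF sg bcd]) (use p q True bcd P in auto)
      then show ?thesis by blast
    next
      case False
      obtain r s where rs: "distinct [x,y,p,q,r,s]" "V = {x,y,p,q,r,s}"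
        using rest2[OF fin assms(2), of x y p q] xy(2) p q pq xV yV False by auto
      have "hamiltonian V E"
        by (rule case1b[OF sg rs]) (use p q rs P in auto)
      then show ?thesis by blast
    qed
  next
    case False
    have pxy: "p1 \<noteq> y" "p2 \<noteq> y" "q1 \<noteq> x" "q2 \<noteq> x" using pp qq False sym by blast+
    show ?thesis
    proof (cases "{p1,p2} = {q1,q2}")
      case True
      have "neighbors V E x = neighbors V E y" unfolding neighbors_def using pp qq True by auto
      then show ?thesis using xV yV xy(2) dx dy False by blast
    next
      case ne: False
      show ?thesis
      proof (cases "p1 = q1 \<or> p1 = q2 \<or> p2 = q1 \<or> p2 = q2")
        case True
        then obtain a b c where abc: "distinct [x,y,a,b,c]" "{a,b,c} \<subseteq> V"
          "\<forall>u. E x u \<longleftrightarrow> u = a \<or> u = c" "\<forall>u. E y u \<longleftrightarrow> u = b \<or> u = c"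
        proof (elim disjE)
          assume "p1 = q1" then show ?thesis using that[of p2 q2 p1] pp qq pne pxy ne pV xy(2) by auto
        next
          assume "p1 = q2" then show ?thesis using that[of p2 q1 p1] pp qq pne pxy ne pV xy(2) by auto
        next
          assume "p2 = q1" then show ?thesis using that[of p1 q2 p2] pp qq pne pxy ne pV xy(2) by auto
        next
          assume "p2 = q2" then show ?thesis using that[of p1 q1 p2] pp qq pne pxy ne pV xy(2) by auto
        qed
        obtain d where d: "distinct [x,y,a,b,c,d]" "V = {x,y,a,b,c,d}"
          using rest1[OF fin assms(2), of x y a b c] abc xV yV by auto
        have "hamiltonian V E"
          by (rule case2b[OF sg d abc(3,4)]) (use d P in auto)
        then show ?thesis by blast
      next
        case False
        have d: "distinct [x,y,p1,p2,q1,q2]" using False pp qq pne pxy xy(2) by auto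
        then have VV: "V = {x,y,p1,p2,q1,q2}" using rest_eq[OF fin assms(2) d] pV xV yV by auto
        have "hamiltonian V E"
          by (rule case2c[OF sg d VV pp(2) qq(2)]) (use d VV P in auto)
        then show ?thesis by blast
      qed
    qed
  qed
qed

end
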